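(* For every slat-doctrine $P:\mathcal{C}^{\mathrm{op}}\to\mathbf{Pos}$, its universal completion $P^{un}$ is a universal slat-doctrine.
   Context: A slat-doctrine is a functor $P:\mathcal{C}^{\mathrm{op}}\to\mathbf{Pos}$ with $\mathcal{C}$ having finite products; $P_f:P(Y)\to P(X)$ is reindexing along $f:X\to Y$. It is universal if for all $A_1,A_2$ and $i=1,2$ the map $P_{\mathrm{pr}_i}:P(A_i)\to P(A_1\times A_2)$ has a right adjoint $\forall_{\mathrm{pr}_i}$ and these satisfy Beck–Chevalley: for every pullback of a projection $\mathrm{pr}:X\to A$ along $f:A'\to A$, with resulting projection $\mathrm{pr}':X'\to A'$ and $f':X'\to X$, $\forall_{\mathrm{pr}'}P_{f'}=P_f\forall_{\mathrm{pr}}$. Universal completion: $P^{un}(A)$ is the poset (reflection of the preorder) of triples $(A,B,\alpha)$ with $B$ an object of $\mathcal{C}$ and $\alpha\in P(A\times B)$, where $(A,B,\alpha)\le(A,C,\beta)$ iff there is an arrow $g:A\times C\to B$ with $P_{\langle\mathrm{pr}_A,g\rangle}(\alpha)\le\beta$; for $f:A\to C$, $P^{un}_f(C,D,\gamma)=(A,D,P_{f\times 1_D}(\gamma))$. *)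

theory Defs
  imports Main
begin

record ('o,'a) fpcat =
  Ob  :: "'o set"
  Ar  :: "'a set"
  cdom :: "'a \<Rightarrow> 'o"
  ccod :: "'a \<Rightarrow> 'o"
  cmp :: "'a \<Rightarrow> 'a \<Rightarrow> 'a"   (* cmp g f = g \<circ> f *)
  cid :: "'o \<Rightarrow> 'a"
  prd :: "'o \<Rightarrow> 'o \<Rightarrow> 'o"
  pj1 :: "'o \<Rightarrow> 'o \<Rightarrow> 'a"
  pj2 :: "'o \<Rightarrow> 'o \<Rightarrow> 'a"
  tup :: "'a \<Rightarrow> 'a \<Rightarrow> 'a"
  trm :: "'o"
  bang :: "'o \<Rightarrow> 'a"

definition hom :: "('o,'a,'m) fpcat_scheme \<Rightarrow> 'o \<Rightarrow> 'o \<Rightarrow> 'a set" where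
  "hom C X Y = {f \<in> Ar C. cdom C f = X \<and> ccod C f = Y}"

definition category :: "('o,'a,'m) fpcat_scheme \<Rightarrow> bool" where
  "category C \<longleftrightarrow>
     (\<forall>f\<in>Ar C. cdom C f \<in> Ob C \<and> ccod C f \<in> Ob C) \<and>
     (\<forall>A\<in>Ob C. cid C A \<in> hom C A A) \<and>
     (\<forall>f\<in>Ar C. \<forall>g\<in>Ar C. ccod C f = cdom C g \<longrightarrow>
        cmp C g f \<in> hom C (cdom C f) (ccod C g)) \<and>
     (\<forall>f\<in>Ar C. cmp C f (cid C (cdom C f)) = f \<and> cmp C (cid C (ccod C f)) f = f) \<and>
     (\<forall>f\<in>Ar C. \<forall>g\<in>Ar C. \<forall>h\<in>Ar C. ccod C f = cdom C g \<longrightarrow> ccod C g = cdom C h \<longrightarrow>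
        cmp C h (cmp C g f) = cmp C (cmp C h g) f)"

definition fp_category :: "('o,'a,'m) fpcat_scheme \<Rightarrow> bool" where
  "fp_category C \<longleftrightarrow> category C \<and>
     (\<forall>A\<in>Ob C. \<forall>B\<in>Ob C.
        prd C A B \<in> Ob C \<and>
        pj1 C A B \<in> hom C (prd C A B) A \<and>
        pj2 C A B \<in> hom C (prd C A B) B \<and>
        (\<forall>X\<in>Ob C. \<forall>f\<in>hom C X A. \<forall>g\<in>hom C X B.
            tup C f g \<in> hom C X (prd C A B) \<and>
            cmp C (pj1 C A B) (tup C f g) = f \<and>
            cmp C (pj2 C A B) (tup C f g) = g \<and>
            (\<forall>h\<in>hom C X (prd C A B).
               cmp C (pj1 C A B) h = f \<and> cmp C (pj2 C A B) h = g \<longrightarrow> h = tup C f g))) \<and>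
     trm C \<in> Ob C \<and>
     (\<forall>X\<in>Ob C. bang C X \<in> hom C X (trm C) \<and> (\<forall>h\<in>hom C X (trm C). h = bang C X))"

definition fprod :: "('o,'a,'m) fpcat_scheme \<Rightarrow> 'a \<Rightarrow> 'a \<Rightarrow> 'a" where
  "fprod C f g = tup C (cmp C f (pj1 C (cdom C f) (cdom C g)))
                       (cmp C g (pj2 C (cdom C f) (cdom C g)))"

text \<open>A functor \<open>P : C^op \<rightarrow> Pos\<close>: carrier \<open>carr P A\<close> with order \<open>le P A\<close>,
and reindexing \<open>rmap P f : P(Y) \<rightarrow> P(X)\<close> for \<open>f : X \<rightarrow> Y\<close>.\<close>
record ('o,'a,'e) doctrine =
  carr :: "'o \<Rightarrow> 'e set"
  le   :: "'o \<Rightarrow> 'e \<Rightarrow> 'e \<Rightarrow> bool"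
  rmap :: "'a \<Rightarrow> 'e \<Rightarrow> 'e"

definition slat_doctrine :: "('o,'a,'m) fpcat_scheme \<Rightarrow> ('o,'a,'e) doctrine \<Rightarrow> bool" where
  "slat_doctrine C P \<longleftrightarrow> fp_category C \<and>
     (\<forall>A\<in>Ob C.
        (\<forall>x\<in>carr P A. le P A x x) \<and>
        (\<forall>x\<in>carr P A. \<forall>y\<in>carr P A. \<forall>z\<in>carr P A. le P A x y \<longrightarrow> le P A y z \<longrightarrow> le P A x z) \<and>
        (\<forall>x\<in>carr P A. \<forall>y\<in>carr P A. le P A x y \<longrightarrow> le P A y x \<longrightarrow> x = y)) \<and>
     (\<forall>f\<in>Ar C. \<forall>y\<in>carr P (ccod C f). rmap P f y \<in> carr P (cdom C f)) \<and>
     (\<forall>f\<in>Ar C. \<forall>y\<in>carr P (ccod C f). \<forall>y'\<in>carr P (ccod C f).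
        le P (ccod C f) y y' \<longrightarrow> le P (cdom C f) (rmap P f y) (rmap P f y')) \<and>
     (\<forall>A\<in>Ob C. \<forall>x\<in>carr P A. rmap P (cid C A) x = x) \<and>
     (\<forall>f\<in>Ar C. \<forall>g\<in>Ar C. ccod C f = cdom C g \<longrightarrow>
        (\<forall>z\<in>carr P (ccod C g). rmap P (cmp C g f) z = rmap P f (rmap P g z)))"

text \<open>Universal doctrine: right adjoints \<open>\<forall>_{pr_i}\<close> to reindexing along the product
projections, satisfying Beck--Chevalley for the pullback squares of projections
(the pullback of \<open>pr_1 : A \<times> B \<rightarrow> A\<close> along \<open>f : A' \<rightarrow> A\<close> is \<open>pr_1 : A' \<times> B \<rightarrow> A'\<close>
with \<open>f' = f \<times> 1_B\<close>, and symmetrically for \<open>pr_2\<close>).\<close>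
definition universal_doctrine :: "('o,'a,'m) fpcat_scheme \<Rightarrow> ('o,'a,'e) doctrine \<Rightarrow> bool" where
  "universal_doctrine C P \<longleftrightarrow> slat_doctrine C P \<and>
     (\<exists>fa1 fa2 :: 'o \<Rightarrow> 'o \<Rightarrow> 'e \<Rightarrow> 'e.
        (\<forall>A1\<in>Ob C. \<forall>A2\<in>Ob C.
           (\<forall>y\<in>carr P (prd C A1 A2). fa1 A1 A2 y \<in> carr P A1) \<and>
           (\<forall>x\<in>carr P A1. \<forall>y\<in>carr P (prd C A1 A2).
              le P (prd C A1 A2) (rmap P (pj1 C A1 A2) x) y \<longleftrightarrow> le P A1 x (fa1 A1 A2 y)) \<and>
           (\<forall>y\<in>carr P (prd C A1 A2). fa2 A1 A2 y \<in> carr P A2) \<and>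
           (\<forall>x\<in>carr P A2. \<forall>y\<in>carr P (prd C A1 A2).
              le P (prd C A1 A2) (rmap P (pj2 C A1 A2) x) y \<longleftrightarrow> le P A2 x (fa2 A1 A2 y))) \<and>
        (\<forall>A\<in>Ob C. \<forall>B\<in>Ob C. \<forall>A'\<in>Ob C. \<forall>f\<in>hom C A' A.
           (\<forall>y\<in>carr P (prd C A B).
              fa1 A' B (rmap P (fprod C f (cid C B)) y) = rmap P f (fa1 A B y)) \<and>
           (\<forall>y\<in>carr P (prd C B A).
              fa2 B A' (rmap P (fprod C (cid C B) f) y) = rmap P f (fa2 B A y))))"

text \<open>Raw elements of \<open>P^un(A)\<close>: pairs \<open>(B, \<alpha>)\<close> with \<open>\<alpha> \<in> P(A \<times> B)\<close>
(standing for the triple \<open>(A,B,\<alpha>)\<close>).\<close>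
definition un_raw :: "('o,'a,'m) fpcat_scheme \<Rightarrow> ('o,'a,'e) doctrine \<Rightarrow> 'o \<Rightarrow> ('o \<times> 'e) set" where
  "un_raw C P A = {(B, \<alpha>). B \<in> Ob C \<and> \<alpha> \<in> carr P (prd C A B)}"

definition un_pre :: "('o,'a,'m) fpcat_scheme \<Rightarrow> ('o,'a,'e) doctrine \<Rightarrow> 'o \<Rightarrow> ('o \<times> 'e) \<Rightarrow> ('o \<times> 'e) \<Rightarrow> bool" where
  "un_pre C P A p q = (case p of (B, \<alpha>) \<Rightarrow> case q of (D, \<beta>) \<Rightarrow>
      \<exists>g\<in>hom C (prd C A D) B.
        le P (prd C A D) (rmap P (tup C (pj1 C A D) g) \<alpha>) \<beta>)"

definition un_equiv :: "('o,'a,'m) fpcat_scheme \<Rightarrow> ('o,'a,'e) doctrine \<Rightarrow> 'o \<Rightarrow> ('o \<times> 'e) \<Rightarrow> ('o \<times> 'e) \<Rightarrow> bool" where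
  "un_equiv C P A p q \<longleftrightarrow> un_pre C P A p q \<and> un_pre C P A q p"

definition un_class :: "('o,'a,'m) fpcat_scheme \<Rightarrow> ('o,'a,'e) doctrine \<Rightarrow> 'o \<Rightarrow> ('o \<times> 'e) \<Rightarrow> ('o \<times> 'e) set" where
  "un_class C P A p = {q \<in> un_raw C P A. un_equiv C P A p q}"

text \<open>The poset reflection: equivalence classes, ordered by the preorder on representatives;
reindexing along \<open>f : A \<rightarrow> C\<close> sends the class of \<open>(D,\<gamma>)\<close> to that of \<open>(D, P_{f\<times>1_D}(\<gamma>))\<close>.\<close>
definition un_completion :: "('o,'a,'m) fpcat_scheme \<Rightarrow> ('o,'a,'e) doctrine \<Rightarrow> ('o,'a,('o \<times> 'e) set) doctrine" where
  "un_completion C P =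
     \<lparr> carr = (\<lambda>A. un_class C P A ` un_raw C P A),
       le = (\<lambda>A X Y. \<exists>p\<in>X. \<exists>q\<in>Y. un_pre C P A p q),
       rmap = (\<lambda>f X. \<Union>(D, \<gamma>)\<in>X. un_class C P (cdom C f) (D, rmap P (fprod C f (cid C D)) \<gamma>)) \<rparr>"

end

theory Submission
  imports Defs
begin

locale sdoc =
  fixes C :: "('o,'a,'m) fpcat_scheme" and P :: "('o,'a,'e) doctrine"
  assumes sd: "slat_doctrine C P"
begin

lemma fp: "fp_category C" using sd unfolding slat_doctrine_def by blast
lemma cat: "category C" using fp unfolding fp_category_def by blast

lemma dom_Ob[simp]: "f \<in> Ar C \<Longrightarrow> cdom C f \<in> Ob C"
  using cat unfolding category_def by blast
lemma cod_Ob[simp]: "f \<in> Ar C \<Longrightarrow> ccod C f \<in> Ob C"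
  using cat unfolding category_def by blast
lemma cid_Ar[simp]: "A \<in> Ob C \<Longrightarrow> cid C A \<in> Ar C"
  and cid_dom[simp]: "A \<in> Ob C \<Longrightarrow> cdom C (cid C A) = A"
  and cid_cod[simp]: "A \<in> Ob C \<Longrightarrow> ccod C (cid C A) = A"
  using cat unfolding category_def hom_def by blast+
lemma cmp_Ar[simp]: "f \<in> Ar C \<Longrightarrow> g \<in> Ar C \<Longrightarrow> ccod C f = cdom C g \<Longrightarrow> cmp C g f \<in> Ar C"
  and cmp_dom[simp]: "f \<in> Ar C \<Longrightarrow> g \<in> Ar C \<Longrightarrow> ccod C f = cdom C g \<Longrightarrow> cdom C (cmp C g f) = cdom C f"
  and cmp_cod[simp]: "f \<in> Ar C \<Longrightarrow> g \<in> Ar C \<Longrightarrow> ccod C f = cdom C g \<Longrightarrow> ccod C (cmp C g f) = ccod C g"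
  using cat unfolding category_def hom_def by blast+
lemma cmp_id_r[simp]: "f \<in> Ar C \<Longrightarrow> cdom C f = X \<Longrightarrow> cmp C f (cid C X) = f"
  and cmp_id_l[simp]: "f \<in> Ar C \<Longrightarrow> ccod C f = X \<Longrightarrow> cmp C (cid C X) f = f"
  using cat unfolding category_def by blast+
lemma assoc[simp]: "f \<in> Ar C \<Longrightarrow> g \<in> Ar C \<Longrightarrow> h \<in> Ar C \<Longrightarrow> ccod C f = cdom C g \<Longrightarrow> ccod C g = cdom C h \<Longrightarrow>
   cmp C (cmp C h g) f = cmp C h (cmp C g f)"
  using cat unfolding category_def by metis

lemma prd_Ob[simp]: "A \<in> Ob C \<Longrightarrow> B \<in> Ob C \<Longrightarrow> prd C A B \<in> Ob C"
  using fp unfolding fp_category_def by blast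
lemma pj1_Ar[simp]: "A \<in> Ob C \<Longrightarrow> B \<in> Ob C \<Longrightarrow> pj1 C A B \<in> Ar C"
  and pj1_dom[simp]: "A \<in> Ob C \<Longrightarrow> B \<in> Ob C \<Longrightarrow> cdom C (pj1 C A B) = prd C A B"
  and pj1_cod[simp]: "A \<in> Ob C \<Longrightarrow> B \<in> Ob C \<Longrightarrow> ccod C (pj1 C A B) = A"
  and pj2_Ar[simp]: "A \<in> Ob C \<Longrightarrow> B \<in> Ob C \<Longrightarrow> pj2 C A B \<in> Ar C"
  and pj2_dom[simp]: "A \<in> Ob C \<Longrightarrow> B \<in> Ob C \<Longrightarrow> cdom C (pj2 C A B) = prd C A B"
  and pj2_cod[simp]: "A \<in> Ob C \<Longrightarrow> B \<in> Ob C \<Longrightarrow> ccod C (pj2 C A B) = B"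
  using fp unfolding fp_category_def hom_def by blast+

lemma tup_props: "f \<in> Ar C \<Longrightarrow> g \<in> Ar C \<Longrightarrow> cdom C f = cdom C g \<Longrightarrow>
   tup C f g \<in> hom C (cdom C f) (prd C (ccod C f) (ccod C g)) \<and>
   cmp C (pj1 C (ccod C f) (ccod C g)) (tup C f g) = f \<and>
   cmp C (pj2 C (ccod C f) (ccod C g)) (tup C f g) = g \<and>
   (\<forall>h\<in>hom C (cdom C f) (prd C (ccod C f) (ccod C g)).
      cmp C (pj1 C (ccod C f) (ccod C g)) h = f \<and> cmp C (pj2 C (ccod C f) (ccod C g)) h = g \<longrightarrow> h = tup C f g)"
proof -
  assume a: "f \<in> Ar C" "g \<in> Ar C" "cdom C f = cdom C g"
  have "f \<in> hom C (cdom C f) (ccod C f)" "g \<in> hom C (cdom C f) (ccod C g)"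
    using a unfolding hom_def by auto
  then show ?thesis using fp a unfolding fp_category_def
    by (metis cod_Ob dom_Ob)
qed

lemma tup_Ar[simp]: "f \<in> Ar C \<Longrightarrow> g \<in> Ar C \<Longrightarrow> cdom C f = cdom C g \<Longrightarrow> tup C f g \<in> Ar C"
  and tup_dom[simp]: "f \<in> Ar C \<Longrightarrow> g \<in> Ar C \<Longrightarrow> cdom C f = cdom C g \<Longrightarrow> cdom C (tup C f g) = cdom C f"
  and tup_cod[simp]: "f \<in> Ar C \<Longrightarrow> g \<in> Ar C \<Longrightarrow> cdom C f = cdom C g \<Longrightarrow> ccod C (tup C f g) = prd C (ccod C f) (ccod C g)"
  using tup_props unfolding hom_def by blast+

lemma pj1_tup[simp]: "f \<in> Ar C \<Longrightarrow> g \<in> Ar C \<Longrightarrow> cdom C f = cdom C g \<Longrightarrow> ccod C f = A \<Longrightarrow> ccod C g = B \<Longrightarrow>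
   cmp C (pj1 C A B) (tup C f g) = f"
  and pj2_tup[simp]: "f \<in> Ar C \<Longrightarrow> g \<in> Ar C \<Longrightarrow> cdom C f = cdom C g \<Longrightarrow> ccod C f = A \<Longrightarrow> ccod C g = B \<Longrightarrow>
   cmp C (pj2 C A B) (tup C f g) = g"
  using tup_props by blast+

lemma tup_eta: "h \<in> Ar C \<Longrightarrow> A \<in> Ob C \<Longrightarrow> B \<in> Ob C \<Longrightarrow> ccod C h = prd C A B \<Longrightarrow>
   tup C (cmp C (pj1 C A B) h) (cmp C (pj2 C A B) h) = h"
proof -
  assume a: "h \<in> Ar C" "A \<in> Ob C" "B \<in> Ob C" "ccod C h = prd C A B"
  have "h \<in> hom C (cdom C (cmp C (pj1 C A B) h)) (prd C (ccod C (cmp C (pj1 C A B) h)) (ccod C (cmp C (pj2 C A B) h)))"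
    using a unfolding hom_def by simp
  then show ?thesis using tup_props[of "cmp C (pj1 C A B) h" "cmp C (pj2 C A B) h"] a
    by simp
qed

lemma tup_eta_simp[simp]: "h \<in> Ar C \<Longrightarrow> ccod C h = prd C A B \<Longrightarrow> A \<in> Ob C \<Longrightarrow> B \<in> Ob C \<Longrightarrow>
   tup C (cmp C (pj1 C A B) h) (cmp C (pj2 C A B) h) = h"
  by (rule tup_eta)

lemma tup_pj[simp]: "A \<in> Ob C \<Longrightarrow> B \<in> Ob C \<Longrightarrow> tup C (pj1 C A B) (pj2 C A B) = cid C (prd C A B)"
  using tup_eta[of "cid C (prd C A B)" A B] by simp

lemma tup_cmp[simp]: "f \<in> Ar C \<Longrightarrow> g \<in> Ar C \<Longrightarrow> h \<in> Ar C \<Longrightarrow> cdom C f = cdom C g \<Longrightarrow> ccod C h = cdom C f \<Longrightarrow>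
   cmp C (tup C f g) h = tup C (cmp C f h) (cmp C g h)"
proof -
  assume a: "f \<in> Ar C" "g \<in> Ar C" "h \<in> Ar C" "cdom C f = cdom C g" "ccod C h = cdom C f"
  have "tup C (cmp C (pj1 C (ccod C f) (ccod C g)) (cmp C (tup C f g) h))
              (cmp C (pj2 C (ccod C f) (ccod C g)) (cmp C (tup C f g) h)) = cmp C (tup C f g) h"
    using a by (intro tup_eta) auto
  moreover have "cmp C (pj1 C (ccod C f) (ccod C g)) (cmp C (tup C f g) h) = cmp C f h"
    using a assoc[of h "tup C f g" "pj1 C (ccod C f) (ccod C g)"] by simp
  moreover have "cmp C (pj2 C (ccod C f) (ccod C g)) (cmp C (tup C f g) h) = cmp C g h"
    using a assoc[of h "tup C f g" "pj2 C (ccod C f) (ccod C g)"] by simp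
  ultimately show ?thesis by simp
qed

lemma fprod_eq[simp]: "fprod C f g = tup C (cmp C f (pj1 C (cdom C f) (cdom C g)))
                       (cmp C g (pj2 C (cdom C f) (cdom C g)))"
  by (simp add: fprod_def)

end

context sdoc begin

definition iso1 where "iso1 A1 A2 B = tup C (tup C (pj1 C A1 (prd C A2 B)) (cmp C (pj1 C A2 B) (pj2 C A1 (prd C A2 B)))) (cmp C (pj2 C A2 B) (pj2 C A1 (prd C A2 B)))"
definition inv1 where "inv1 A1 A2 D = tup C (cmp C (pj1 C A1 A2) (pj1 C (prd C A1 A2) D)) (tup C (cmp C (pj2 C A1 A2) (pj1 C (prd C A1 A2) D)) (pj2 C (prd C A1 A2) D))"
definition iso2 where "iso2 A1 A2 B = tup C (tup C (cmp C (pj1 C A1 B) (pj2 C A2 (prd C A1 B))) (pj1 C A2 (prd C A1 B))) (cmp C (pj2 C A1 B) (pj2 C A2 (prd C A1 B)))"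
definition inv2 where "inv2 A1 A2 D = tup C (cmp C (pj2 C A1 A2) (pj1 C (prd C A1 A2) D)) (tup C (cmp C (pj1 C A1 A2) (pj1 C (prd C A1 A2) D)) (pj2 C (prd C A1 A2) D))"

lemmas isos = iso1_def inv1_def iso2_def inv2_def

lemma "A1 \<in> Ob C \<Longrightarrow> A2 \<in> Ob C \<Longrightarrow> D \<in> Ob C \<Longrightarrow> cmp C (iso1 A1 A2 D) (inv1 A1 A2 D) = cid C (prd C (prd C A1 A2) D)"
  by (simp add: isos)
lemma "A1 \<in> Ob C \<Longrightarrow> A2 \<in> Ob C \<Longrightarrow> D \<in> Ob C \<Longrightarrow> cmp C (iso2 A1 A2 D) (inv2 A1 A2 D) = cid C (prd C (prd C A1 A2) D)"
  by (simp add: isos)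
lemma "A1 \<in> Ob C \<Longrightarrow> A2 \<in> Ob C \<Longrightarrow> D \<in> Ob C \<Longrightarrow> B \<in> Ob C \<Longrightarrow> g \<in> Ar C \<Longrightarrow> cdom C g = prd C (prd C A1 A2) D \<Longrightarrow> ccod C g = B \<Longrightarrow>
  cmp C (cmp C (fprod C (pj1 C A1 A2) (cid C B)) (tup C (pj1 C (prd C A1 A2) D) g)) (iso1 A1 A2 D)
  = tup C (pj1 C A1 (prd C A2 D)) (cmp C g (iso1 A1 A2 D))"
  by (simp add: isos)
lemma "A \<in> Ob C \<Longrightarrow> B \<in> Ob C \<Longrightarrow> D \<in> Ob C \<Longrightarrow> A' \<in> Ob C \<Longrightarrow> f \<in> Ar C \<Longrightarrow> cdom C f = A' \<Longrightarrow> ccod C f = A \<Longrightarrow>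
  cmp C (fprod C (fprod C f (cid C B)) (cid C D)) (iso1 A' B D) = cmp C (iso1 A B D) (fprod C f (cid C (prd C B D)))"
  by (simp add: isos)
lemma "A \<in> Ob C \<Longrightarrow> B \<in> Ob C \<Longrightarrow> D \<in> Ob C \<Longrightarrow> A' \<in> Ob C \<Longrightarrow> f \<in> Ar C \<Longrightarrow> cdom C f = A' \<Longrightarrow> ccod C f = A \<Longrightarrow>
  cmp C (fprod C (fprod C (cid C B) f) (cid C D)) (iso2 B A' D) = cmp C (iso2 B A D) (fprod C f (cid C (prd C B D)))"
  by (simp add: isos)
end

context sdoc begin
lemmas sdu = sd[unfolded slat_doctrine_def]
lemma sdA: "\<forall>A\<in>Ob C.
        (\<forall>x\<in>carr P A. le P A x x) \<and>
        (\<forall>x\<in>carr P A. \<forall>y\<in>carr P A. \<forall>z\<in>carr P A. le P A x y \<longrightarrow> le P A y z \<longrightarrow> le P A x z) \<and>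
        (\<forall>x\<in>carr P A. \<forall>y\<in>carr P A. le P A x y \<longrightarrow> le P A y x \<longrightarrow> x = y)"
  using conjunct1[OF conjunct2[OF sdu]] .
lemma sdB: "\<forall>f\<in>Ar C. \<forall>y\<in>carr P (ccod C f). rmap P f y \<in> carr P (cdom C f)"
  using conjunct1[OF conjunct2[OF conjunct2[OF sdu]]] .
lemma sdC: "\<forall>f\<in>Ar C. \<forall>y\<in>carr P (ccod C f). \<forall>y'\<in>carr P (ccod C f).
        le P (ccod C f) y y' \<longrightarrow> le P (cdom C f) (rmap P f y) (rmap P f y')"
  using conjunct1[OF conjunct2[OF conjunct2[OF conjunct2[OF sdu]]]] .
lemma sdD: "\<forall>A\<in>Ob C. \<forall>x\<in>carr P A. rmap P (cid C A) x = x"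
  using conjunct1[OF conjunct2[OF conjunct2[OF conjunct2[OF conjunct2[OF sdu]]]]] .
lemma sdE: "\<forall>f\<in>Ar C. \<forall>g\<in>Ar C. ccod C f = cdom C g \<longrightarrow>
        (\<forall>z\<in>carr P (ccod C g). rmap P (cmp C g f) z = rmap P f (rmap P g z))"
  using conjunct2[OF conjunct2[OF conjunct2[OF conjunct2[OF conjunct2[OF sdu]]]]] .

lemma le_refl: "A \<in> Ob C \<Longrightarrow> x \<in> carr P A \<Longrightarrow> le P A x x"
  using sdA by blast
lemma le_trans: "A \<in> Ob C \<Longrightarrow> x \<in> carr P A \<Longrightarrow> y \<in> carr P A \<Longrightarrow> z \<in> carr P A \<Longrightarrow> le P A x y \<Longrightarrow> le P A y z \<Longrightarrow> le P A x z"
  using sdA by blast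
lemma le_antisym: "A \<in> Ob C \<Longrightarrow> x \<in> carr P A \<Longrightarrow> y \<in> carr P A \<Longrightarrow> le P A x y \<Longrightarrow> le P A y x \<Longrightarrow> x = y"
  using sdA by blast
lemma rmap_carr[simp]: "f \<in> Ar C \<Longrightarrow> ccod C f = Y \<Longrightarrow> cdom C f = X \<Longrightarrow> y \<in> carr P Y \<Longrightarrow> rmap P f y \<in> carr P X"
  using sdB by blast
lemma rmap_mono: "f \<in> Ar C \<Longrightarrow> ccod C f = Y \<Longrightarrow> cdom C f = X \<Longrightarrow> y \<in> carr P Y \<Longrightarrow> y' \<in> carr P Y \<Longrightarrow>
   le P Y y y' \<Longrightarrow> le P X (rmap P f y) (rmap P f y')"
  using sdC by blast
lemma rmap_id[simp]: "A \<in> Ob C \<Longrightarrow> x \<in> carr P A \<Longrightarrow> rmap P (cid C A) x = x"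
  using sdD by blast
lemma rmap_cmp: "f \<in> Ar C \<Longrightarrow> g \<in> Ar C \<Longrightarrow> ccod C f = cdom C g \<Longrightarrow> z \<in> carr P (ccod C g) \<Longrightarrow>
   rmap P (cmp C g f) z = rmap P f (rmap P g z)"
  using sdE by blast
lemma raw_iff[simp]: "(B,\<alpha>) \<in> un_raw C P A \<longleftrightarrow> B \<in> Ob C \<and> \<alpha> \<in> carr P (prd C A B)"
  by (simp add: un_raw_def)

lemma pre_iff: "un_pre C P A (B,\<alpha>) (D,\<beta>) \<longleftrightarrow>
  (\<exists>g\<in>Ar C. cdom C g = prd C A D \<and> ccod C g = B \<and> le P (prd C A D) (rmap P (tup C (pj1 C A D) g) \<alpha>) \<beta>)"
  by (auto simp: un_pre_def hom_def)

lemma pre_refl: assumes "A \<in> Ob C" "p \<in> un_raw C P A" shows "un_pre C P A p p"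
proof -
  obtain B \<alpha> where p: "p = (B,\<alpha>)" by fastforce
  show ?thesis using assms unfolding p pre_iff
    by (intro bexI[of _ "pj2 C A B"]) (auto intro: le_refl)
qed

lemma pre_trans: assumes A: "A \<in> Ob C" and raw: "p \<in> un_raw C P A" "q \<in> un_raw C P A" "r \<in> un_raw C P A"
  and pq: "un_pre C P A p q" and qr: "un_pre C P A q r" shows "un_pre C P A p r"
proof -
  obtain B \<alpha> where p: "p = (B,\<alpha>)" by fastforce
  obtain D \<beta> where q: "q = (D,\<beta>)" by fastforce
  obtain E \<gamma> where r: "r = (E,\<gamma>)" by fastforce
  have rw: "B \<in> Ob C" "\<alpha> \<in> carr P (prd C A B)" "D \<in> Ob C" "\<beta> \<in> carr P (prd C A D)" "E \<in> Ob C" "\<gamma> \<in> carr P (prd C A E)"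
    using raw p q r by auto
  obtain g where g: "g \<in> Ar C" "cdom C g = prd C A D" "ccod C g = B" "le P (prd C A D) (rmap P (tup C (pj1 C A D) g) \<alpha>) \<beta>"
    using pq unfolding p q pre_iff by blast
  obtain h where h: "h \<in> Ar C" "cdom C h = prd C A E" "ccod C h = D" "le P (prd C A E) (rmap P (tup C (pj1 C A E) h) \<beta>) \<gamma>"
    using qr unfolding q r pre_iff by blast
  define k where "k = cmp C g (tup C (pj1 C A E) h)"
  have k: "k \<in> Ar C" "cdom C k = prd C A E" "ccod C k = B" using g h A rw by (auto simp: k_def)
  have eq: "tup C (pj1 C A E) k = cmp C (tup C (pj1 C A D) g) (tup C (pj1 C A E) h)"
    using g h A rw by (simp add: k_def)
  have "rmap P (tup C (pj1 C A E) k) \<alpha> = rmap P (tup C (pj1 C A E) h) (rmap P (tup C (pj1 C A D) g) \<alpha>)"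
    unfolding eq using g h A rw by (subst rmap_cmp) auto
  also have "le P (prd C A E) \<dots> (rmap P (tup C (pj1 C A E) h) \<beta>)"
    using g h A rw by (intro rmap_mono) auto
  finally have "le P (prd C A E) (rmap P (tup C (pj1 C A E) k) \<alpha>) (rmap P (tup C (pj1 C A E) h) \<beta>)" .
  then have "le P (prd C A E) (rmap P (tup C (pj1 C A E) k) \<alpha>) \<gamma>"
    using h g A rw k by (intro le_trans[OF _ _ _ _ _ h(4)]) auto
  then show ?thesis unfolding p r pre_iff using k by blast
qed

end

context sdoc begin

lemma cls_self: "A \<in> Ob C \<Longrightarrow> p \<in> un_raw C P A \<Longrightarrow> p \<in> un_class C P A p"
  by (simp add: un_class_def un_equiv_def pre_refl)

lemma cls_sub: "un_class C P A p \<subseteq> un_raw C P A"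
  by (auto simp: un_class_def)

lemma cls_eq: assumes A: "A \<in> Ob C" and p: "p \<in> un_raw C P A" and q: "q \<in> un_raw C P A" and e: "un_equiv C P A p q"
  shows "un_class C P A p = un_class C P A q"
proof -
  have pq: "un_pre C P A p q" and qp: "un_pre C P A q p" using e unfolding un_equiv_def by auto
  have "un_equiv C P A p r \<longleftrightarrow> un_equiv C P A q r" if r: "r \<in> un_raw C P A" for r
  proof
    assume "un_equiv C P A p r"
    then have "un_pre C P A p r" "un_pre C P A r p" unfolding un_equiv_def by auto
    then show "un_equiv C P A q r" unfolding un_equiv_def
      using pre_trans[OF A q p r qp] pre_trans[OF A r p q _ pq] by simp
  next
    assume "un_equiv C P A q r"
    then have "un_pre C P A q r" "un_pre C P A r q" unfolding un_equiv_def by auto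
    then show "un_equiv C P A p r" unfolding un_equiv_def
      using pre_trans[OF A p q r pq] pre_trans[OF A r q p _ qp] by simp
  qed
  then show ?thesis unfolding un_class_def by auto
qed

lemma cls_mem: "q \<in> un_class C P A p \<Longrightarrow> un_equiv C P A p q \<and> q \<in> un_raw C P A"
  by (simp add: un_class_def)

lemma cls_eq_iff: assumes "A \<in> Ob C" "p \<in> un_raw C P A" "q \<in> un_raw C P A"
  shows "un_class C P A p = un_class C P A q \<longleftrightarrow> un_equiv C P A p q"
  using assms cls_eq cls_self[of A q] cls_mem[of q A p] by blast

lemma carr_un: "carr (un_completion C P) A = un_class C P A ` un_raw C P A"
  by (simp add: un_completion_def)
lemma le_un: "le (un_completion C P) A X Y = (\<exists>p\<in>X. \<exists>q\<in>Y. un_pre C P A p q)"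
  by (simp add: un_completion_def)

definition Fr where "Fr f q = (fst q, rmap P (fprod C f (cid C (fst q))) (snd q))"

lemma rmap_un: "rmap (un_completion C P) f X = (\<Union>q\<in>X. un_class C P (cdom C f) (Fr f q))"
  by (simp add: un_completion_def Fr_def split_def)

lemma le_cls: assumes "A \<in> Ob C" "p \<in> un_raw C P A" "q \<in> un_raw C P A"
  shows "le (un_completion C P) A (un_class C P A p) (un_class C P A q) \<longleftrightarrow> un_pre C P A p q"
proof
  assume "le (un_completion C P) A (un_class C P A p) (un_class C P A q)"
  then obtain p' q' where "p' \<in> un_class C P A p" "q' \<in> un_class C P A q" "un_pre C P A p' q'"
    unfolding le_un by blast
  then have "un_pre C P A p p'" "un_pre C P A q' q" "p' \<in> un_raw C P A" "q' \<in> un_raw C P A"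
    unfolding un_class_def un_equiv_def by auto
  then show "un_pre C P A p q" using assms pre_trans[of A] \<open>un_pre C P A p' q'\<close> by meson
next
  assume "un_pre C P A p q"
  then show "le (un_completion C P) A (un_class C P A p) (un_class C P A q)"
    unfolding le_un using cls_self assms by blast
qed

lemma union_cls:
  assumes A: "A \<in> Ob C" "A' \<in> Ob C" and p: "p \<in> un_raw C P A"
    and F: "\<And>q. q \<in> un_raw C P A \<Longrightarrow> F q \<in> un_raw C P A'"
    and M: "\<And>q q'. q \<in> un_raw C P A \<Longrightarrow> q' \<in> un_raw C P A \<Longrightarrow> un_pre C P A q q' \<Longrightarrow> un_pre C P A' (F q) (F q')"
  shows "(\<Union>q\<in>un_class C P A p. un_class C P A' (F q)) = un_class C P A' (F p)"
proof -
  have "un_class C P A' (F q) = un_class C P A' (F p)" if "q \<in> un_class C P A p" for q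
  proof -
    have "un_equiv C P A p q" "q \<in> un_raw C P A" using cls_mem[OF that] by auto
    then show ?thesis using cls_eq[of A' "F q" "F p"] A p F M unfolding un_equiv_def by auto
  qed
  then show ?thesis using cls_self[OF A(1) p] by blast
qed


lemma rmap2: "a \<in> Ar C \<Longrightarrow> b \<in> Ar C \<Longrightarrow> c \<in> Ar C \<Longrightarrow> d \<in> Ar C \<Longrightarrow> ccod C a = cdom C b \<Longrightarrow> ccod C c = cdom C d
  \<Longrightarrow> ccod C b = Z \<Longrightarrow> ccod C d = Z \<Longrightarrow> x \<in> carr P Z \<Longrightarrow> cmp C b a = cmp C d c \<Longrightarrow>
  rmap P a (rmap P b x) = rmap P c (rmap P d x)"
  by (metis rmap_cmp)

lemma pre_intro: "h \<in> Ar C \<Longrightarrow> cdom C h = prd C A D \<Longrightarrow> ccod C h = B \<Longrightarrow>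
  le P (prd C A D) (rmap P (tup C (pj1 C A D) h) \<alpha>) \<beta> \<Longrightarrow> un_pre C P A (B,\<alpha>) (D,\<beta>)"
  unfolding pre_iff by blast

lemma Fr_raw: "f \<in> Ar C \<Longrightarrow> ccod C f = Y \<Longrightarrow> cdom C f = X \<Longrightarrow> q \<in> un_raw C P Y \<Longrightarrow> Fr f q \<in> un_raw C P X"
  by (cases q) (auto simp: Fr_def)

lemma Fr_pre: assumes f: "f \<in> Ar C" "ccod C f = Y" "cdom C f = X" and q: "q \<in> un_raw C P Y" "q' \<in> un_raw C P Y"
  and pq: "un_pre C P Y q q'" shows "un_pre C P X (Fr f q) (Fr f q')"
proof -
  obtain D \<gamma> where qq: "q = (D,\<gamma>)" by fastforce
  obtain D' \<gamma>' where qq': "q' = (D',\<gamma>')" by fastforce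
  have rw: "D \<in> Ob C" "\<gamma> \<in> carr P (prd C Y D)" "D' \<in> Ob C" "\<gamma>' \<in> carr P (prd C Y D')"
    using q qq qq' by auto
  have O: "X \<in> Ob C" "Y \<in> Ob C" using f by auto
  obtain g where g: "g \<in> Ar C" "cdom C g = prd C Y D'" "ccod C g = D" "le P (prd C Y D') (rmap P (tup C (pj1 C Y D') g) \<gamma>) \<gamma>'"
    using pq unfolding qq qq' pre_iff by blast
  define g' where "g' = cmp C g (fprod C f (cid C D'))"
  have g': "g' \<in> Ar C" "cdom C g' = prd C X D'" "ccod C g' = D" using f g rw O by (auto simp: g'_def)
  have "rmap P (tup C (pj1 C X D') g') (rmap P (fprod C f (cid C D)) \<gamma>)
     = rmap P (fprod C f (cid C D')) (rmap P (tup C (pj1 C Y D') g) \<gamma>)"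
    using f g rw O by (intro rmap2[where Z="prd C Y D"]) (simp_all add: g'_def)
  also have "le P (prd C X D') \<dots> (rmap P (fprod C f (cid C D')) \<gamma>')"
    using f g rw O by (intro rmap_mono) auto
  finally show ?thesis unfolding qq qq' Fr_def using g' by (auto intro!: pre_intro)
qed


definition F1 where "F1 A1 A2 q = (prd C A2 (fst q), rmap P (iso1 A1 A2 (fst q)) (snd q))"
definition F2 where "F2 A1 A2 q = (prd C A1 (fst q), rmap P (iso2 A1 A2 (fst q)) (snd q))"

lemma F1_raw: "A1 \<in> Ob C \<Longrightarrow> A2 \<in> Ob C \<Longrightarrow> q \<in> un_raw C P (prd C A1 A2) \<Longrightarrow> F1 A1 A2 q \<in> un_raw C P A1"
  by (cases q) (auto simp: F1_def iso1_def)
lemma F2_raw: "A1 \<in> Ob C \<Longrightarrow> A2 \<in> Ob C \<Longrightarrow> q \<in> un_raw C P (prd C A1 A2) \<Longrightarrow> F2 A1 A2 q \<in> un_raw C P A2"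
  by (cases q) (auto simp: F2_def iso2_def)

lemma F1_pre: assumes O: "A1 \<in> Ob C" "A2 \<in> Ob C" and q: "q \<in> un_raw C P (prd C A1 A2)" "q' \<in> un_raw C P (prd C A1 A2)"
  and pq: "un_pre C P (prd C A1 A2) q q'" shows "un_pre C P A1 (F1 A1 A2 q) (F1 A1 A2 q')"
proof -
  obtain B \<alpha> where qq: "q = (B,\<alpha>)" by fastforce
  obtain D \<beta> where qq': "q' = (D,\<beta>)" by fastforce
  have rw: "B \<in> Ob C" "\<alpha> \<in> carr P (prd C (prd C A1 A2) B)" "D \<in> Ob C" "\<beta> \<in> carr P (prd C (prd C A1 A2) D)"
    using q qq qq' by auto
  obtain g where g: "g \<in> Ar C" "cdom C g = prd C (prd C A1 A2) D" "ccod C g = B"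
     "le P (prd C (prd C A1 A2) D) (rmap P (tup C (pj1 C (prd C A1 A2) D) g) \<alpha>) \<beta>"
    using pq unfolding qq qq' pre_iff by blast
  define h where "h = tup C (cmp C (pj1 C A2 D) (pj2 C A1 (prd C A2 D))) (cmp C g (iso1 A1 A2 D))"
  have h: "h \<in> Ar C" "cdom C h = prd C A1 (prd C A2 D)" "ccod C h = prd C A2 B" using g rw O by (auto simp: h_def iso1_def)
  have "rmap P (tup C (pj1 C A1 (prd C A2 D)) h) (rmap P (iso1 A1 A2 B) \<alpha>)
     = rmap P (iso1 A1 A2 D) (rmap P (tup C (pj1 C (prd C A1 A2) D) g) \<alpha>)"
    using g rw O by (intro rmap2[where Z="prd C (prd C A1 A2) B"]) (simp_all add: h_def iso1_def)
  also have "le P (prd C A1 (prd C A2 D)) \<dots> (rmap P (iso1 A1 A2 D) \<beta>)"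
    using g rw O by (intro rmap_mono) (auto simp: iso1_def)
  finally show ?thesis unfolding qq qq' F1_def using h by (auto intro!: pre_intro)
qed

lemma F2_pre: assumes O: "A1 \<in> Ob C" "A2 \<in> Ob C" and q: "q \<in> un_raw C P (prd C A1 A2)" "q' \<in> un_raw C P (prd C A1 A2)"
  and pq: "un_pre C P (prd C A1 A2) q q'" shows "un_pre C P A2 (F2 A1 A2 q) (F2 A1 A2 q')"
proof -
  obtain B \<alpha> where qq: "q = (B,\<alpha>)" by fastforce
  obtain D \<beta> where qq': "q' = (D,\<beta>)" by fastforce
  have rw: "B \<in> Ob C" "\<alpha> \<in> carr P (prd C (prd C A1 A2) B)" "D \<in> Ob C" "\<beta> \<in> carr P (prd C (prd C A1 A2) D)"
    using q qq qq' by auto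
  obtain g where g: "g \<in> Ar C" "cdom C g = prd C (prd C A1 A2) D" "ccod C g = B"
     "le P (prd C (prd C A1 A2) D) (rmap P (tup C (pj1 C (prd C A1 A2) D) g) \<alpha>) \<beta>"
    using pq unfolding qq qq' pre_iff by blast
  define h where "h = tup C (cmp C (pj1 C A1 D) (pj2 C A2 (prd C A1 D))) (cmp C g (iso2 A1 A2 D))"
  have h: "h \<in> Ar C" "cdom C h = prd C A2 (prd C A1 D)" "ccod C h = prd C A1 B" using g rw O by (auto simp: h_def iso2_def)
  have "rmap P (tup C (pj1 C A2 (prd C A1 D)) h) (rmap P (iso2 A1 A2 B) \<alpha>)
     = rmap P (iso2 A1 A2 D) (rmap P (tup C (pj1 C (prd C A1 A2) D) g) \<alpha>)"
    using g rw O by (intro rmap2[where Z="prd C (prd C A1 A2) B"]) (simp_all add: h_def iso2_def)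
  also have "le P (prd C A2 (prd C A1 D)) \<dots> (rmap P (iso2 A1 A2 D) \<beta>)"
    using g rw O by (intro rmap_mono) (auto simp: iso2_def)
  finally show ?thesis unfolding qq qq' F2_def using h by (auto intro!: pre_intro)
qed

lemma rmap_un_cls: assumes f: "f \<in> Ar C" "ccod C f = Y" "cdom C f = X" and p: "p \<in> un_raw C P Y"
  shows "rmap (un_completion C P) f (un_class C P Y p) = un_class C P X (Fr f p)"
  unfolding rmap_un f(3)[symmetric] using f p by (intro union_cls Fr_raw Fr_pre) auto

definition fa1 where "fa1 A1 A2 Y = (\<Union>q\<in>Y. un_class C P A1 (F1 A1 A2 q))"
definition fa2 where "fa2 A1 A2 Y = (\<Union>q\<in>Y. un_class C P A2 (F2 A1 A2 q))"

lemma fa1_cls: "A1 \<in> Ob C \<Longrightarrow> A2 \<in> Ob C \<Longrightarrow> p \<in> un_raw C P (prd C A1 A2) \<Longrightarrow>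
   fa1 A1 A2 (un_class C P (prd C A1 A2) p) = un_class C P A1 (F1 A1 A2 p)"
  unfolding fa1_def by (intro union_cls F1_raw F1_pre) auto
lemma fa2_cls: "A1 \<in> Ob C \<Longrightarrow> A2 \<in> Ob C \<Longrightarrow> p \<in> un_raw C P (prd C A1 A2) \<Longrightarrow>
   fa2 A1 A2 (un_class C P (prd C A1 A2) p) = un_class C P A2 (F2 A1 A2 p)"
  unfolding fa2_def by (intro union_cls F2_raw F2_pre) auto

end

context sdoc begin

lemma rmap3: "a \<in> Ar C \<Longrightarrow> b \<in> Ar C \<Longrightarrow> c \<in> Ar C \<Longrightarrow> ccod C a = cdom C b \<Longrightarrow> ccod C b = cdom C c
  \<Longrightarrow> ccod C c = Z \<Longrightarrow> x \<in> carr P Z \<Longrightarrow> cmp C c (cmp C b a) = d \<Longrightarrow>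
  rmap P d x = rmap P a (rmap P b (rmap P c x))"
proof -
  assume a: "a \<in> Ar C" "b \<in> Ar C" "c \<in> Ar C" "ccod C a = cdom C b" "ccod C b = cdom C c"
    "ccod C c = Z" "x \<in> carr P Z" "cmp C c (cmp C b a) = d"
  have "rmap P d x = rmap P (cmp C b a) (rmap P c x)" using a by (auto intro: rmap_cmp)
  also have "\<dots> = rmap P a (rmap P b (rmap P c x))" using a by (intro rmap_cmp) auto
  finally show ?thesis .
qed

lemma adj1: assumes O: "A1 \<in> Ob C" "A2 \<in> Ob C" and p: "p \<in> un_raw C P A1" and q: "q \<in> un_raw C P (prd C A1 A2)"
  shows "un_pre C P (prd C A1 A2) (Fr (pj1 C A1 A2) p) q \<longleftrightarrow> un_pre C P A1 p (F1 A1 A2 q)"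
proof -
  obtain B \<beta> where pp: "p = (B,\<beta>)" by fastforce
  obtain D \<alpha> where qq: "q = (D,\<alpha>)" by fastforce
  have rw: "B \<in> Ob C" "\<beta> \<in> carr P (prd C A1 B)" "D \<in> Ob C" "\<alpha> \<in> carr P (prd C (prd C A1 A2) D)"
    using p q pp qq by auto
  show ?thesis unfolding pp qq Fr_def F1_def fst_conv snd_conv
  proof
    assume "un_pre C P (prd C A1 A2) (B, rmap P (fprod C (pj1 C A1 A2) (cid C B)) \<beta>) (D, \<alpha>)"
    then obtain g where g: "g \<in> Ar C" "cdom C g = prd C (prd C A1 A2) D" "ccod C g = B"
      "le P (prd C (prd C A1 A2) D) (rmap P (tup C (pj1 C (prd C A1 A2) D) g) (rmap P (fprod C (pj1 C A1 A2) (cid C B)) \<beta>)) \<alpha>"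
      unfolding pre_iff by blast
    define h where "h = cmp C g (iso1 A1 A2 D)"
    have h: "h \<in> Ar C" "cdom C h = prd C A1 (prd C A2 D)" "ccod C h = B" using g rw O by (auto simp: h_def iso1_def)
    have "rmap P (tup C (pj1 C A1 (prd C A2 D)) h) \<beta> = rmap P (iso1 A1 A2 D) (rmap P (tup C (pj1 C (prd C A1 A2) D) g) (rmap P (fprod C (pj1 C A1 A2) (cid C B)) \<beta>))"
      using g rw O by (intro rmap3[where Z="prd C A1 B"]) (simp_all add: h_def iso1_def)
    also have "le P (prd C A1 (prd C A2 D)) \<dots> (rmap P (iso1 A1 A2 D) \<alpha>)"
      using g rw O by (intro rmap_mono) (auto simp: iso1_def)
    finally show "un_pre C P A1 (B, \<beta>) (prd C A2 D, rmap P (iso1 A1 A2 D) \<alpha>)" using h by (auto intro!: pre_intro)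
  next
    assume "un_pre C P A1 (B, \<beta>) (prd C A2 D, rmap P (iso1 A1 A2 D) \<alpha>)"
    then obtain h where h: "h \<in> Ar C" "cdom C h = prd C A1 (prd C A2 D)" "ccod C h = B"
      "le P (prd C A1 (prd C A2 D)) (rmap P (tup C (pj1 C A1 (prd C A2 D)) h) \<beta>) (rmap P (iso1 A1 A2 D) \<alpha>)"
      unfolding pre_iff by blast
    define g where "g = cmp C h (inv1 A1 A2 D)"
    have g: "g \<in> Ar C" "cdom C g = prd C (prd C A1 A2) D" "ccod C g = B" using h rw O by (auto simp: g_def inv1_def)
    have "rmap P (tup C (pj1 C (prd C A1 A2) D) g) (rmap P (fprod C (pj1 C A1 A2) (cid C B)) \<beta>)
        = rmap P (inv1 A1 A2 D) (rmap P (tup C (pj1 C A1 (prd C A2 D)) h) \<beta>)"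
      using h rw O by (intro rmap2[where Z="prd C A1 B"]) (simp_all add: g_def inv1_def)
    also have "le P (prd C (prd C A1 A2) D) \<dots> (rmap P (inv1 A1 A2 D) (rmap P (iso1 A1 A2 D) \<alpha>))"
      using h rw O by (intro rmap_mono) (auto simp: iso1_def inv1_def)
    also have "rmap P (inv1 A1 A2 D) (rmap P (iso1 A1 A2 D) \<alpha>) = rmap P (cmp C (iso1 A1 A2 D) (inv1 A1 A2 D)) \<alpha>"
      using rw O by (subst rmap_cmp) (simp_all add: iso1_def inv1_def)
    also have "\<dots> = \<alpha>" using rw O by (simp add: iso1_def inv1_def)
    finally show "un_pre C P (prd C A1 A2) (B, rmap P (fprod C (pj1 C A1 A2) (cid C B)) \<beta>) (D, \<alpha>)"
      using g by (auto intro!: pre_intro)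
  qed
qed

lemma adj2: assumes O: "A1 \<in> Ob C" "A2 \<in> Ob C" and p: "p \<in> un_raw C P A2" and q: "q \<in> un_raw C P (prd C A1 A2)"
  shows "un_pre C P (prd C A1 A2) (Fr (pj2 C A1 A2) p) q \<longleftrightarrow> un_pre C P A2 p (F2 A1 A2 q)"
proof -
  obtain B \<beta> where pp: "p = (B,\<beta>)" by fastforce
  obtain D \<alpha> where qq: "q = (D,\<alpha>)" by fastforce
  have rw: "B \<in> Ob C" "\<beta> \<in> carr P (prd C A2 B)" "D \<in> Ob C" "\<alpha> \<in> carr P (prd C (prd C A1 A2) D)"
    using p q pp qq by auto
  show ?thesis unfolding pp qq Fr_def F2_def fst_conv snd_conv
  proof
    assume "un_pre C P (prd C A1 A2) (B, rmap P (fprod C (pj2 C A1 A2) (cid C B)) \<beta>) (D, \<alpha>)"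
    then obtain g where g: "g \<in> Ar C" "cdom C g = prd C (prd C A1 A2) D" "ccod C g = B"
      "le P (prd C (prd C A1 A2) D) (rmap P (tup C (pj1 C (prd C A1 A2) D) g) (rmap P (fprod C (pj2 C A1 A2) (cid C B)) \<beta>)) \<alpha>"
      unfolding pre_iff by blast
    define h where "h = cmp C g (iso2 A1 A2 D)"
    have h: "h \<in> Ar C" "cdom C h = prd C A2 (prd C A1 D)" "ccod C h = B" using g rw O by (auto simp: h_def iso2_def)
    have "rmap P (tup C (pj1 C A2 (prd C A1 D)) h) \<beta> = rmap P (iso2 A1 A2 D) (rmap P (tup C (pj1 C (prd C A1 A2) D) g) (rmap P (fprod C (pj2 C A1 A2) (cid C B)) \<beta>))"
      using g rw O by (intro rmap3[where Z="prd C A2 B"]) (simp_all add: h_def iso2_def)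
    also have "le P (prd C A2 (prd C A1 D)) \<dots> (rmap P (iso2 A1 A2 D) \<alpha>)"
      using g rw O by (intro rmap_mono) (auto simp: iso2_def)
    finally show "un_pre C P A2 (B, \<beta>) (prd C A1 D, rmap P (iso2 A1 A2 D) \<alpha>)" using h by (auto intro!: pre_intro)
  next
    assume "un_pre C P A2 (B, \<beta>) (prd C A1 D, rmap P (iso2 A1 A2 D) \<alpha>)"
    then obtain h where h: "h \<in> Ar C" "cdom C h = prd C A2 (prd C A1 D)" "ccod C h = B"
      "le P (prd C A2 (prd C A1 D)) (rmap P (tup C (pj1 C A2 (prd C A1 D)) h) \<beta>) (rmap P (iso2 A1 A2 D) \<alpha>)"
      unfolding pre_iff by blast
    define g where "g = cmp C h (inv2 A1 A2 D)"
    have g: "g \<in> Ar C" "cdom C g = prd C (prd C A1 A2) D" "ccod C g = B" using h rw O by (auto simp: g_def inv2_def)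
    have "rmap P (tup C (pj1 C (prd C A1 A2) D) g) (rmap P (fprod C (pj2 C A1 A2) (cid C B)) \<beta>)
        = rmap P (inv2 A1 A2 D) (rmap P (tup C (pj1 C A2 (prd C A1 D)) h) \<beta>)"
      using h rw O by (intro rmap2[where Z="prd C A2 B"]) (simp_all add: g_def inv2_def)
    also have "le P (prd C (prd C A1 A2) D) \<dots> (rmap P (inv2 A1 A2 D) (rmap P (iso2 A1 A2 D) \<alpha>))"
      using h rw O by (intro rmap_mono) (auto simp: iso2_def inv2_def)
    also have "rmap P (inv2 A1 A2 D) (rmap P (iso2 A1 A2 D) \<alpha>) = rmap P (cmp C (iso2 A1 A2 D) (inv2 A1 A2 D)) \<alpha>"
      using rw O by (subst rmap_cmp) (simp_all add: iso2_def inv2_def)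
    also have "\<dots> = \<alpha>" using rw O by (simp add: iso2_def inv2_def)
    finally show "un_pre C P (prd C A1 A2) (B, rmap P (fprod C (pj2 C A1 A2) (cid C B)) \<beta>) (D, \<alpha>)"
      using g by (auto intro!: pre_intro)
  qed
qed


lemma bc1: assumes O: "A \<in> Ob C" "B \<in> Ob C" "A' \<in> Ob C" and f: "f \<in> Ar C" "cdom C f = A'" "ccod C f = A"
  and p: "p \<in> un_raw C P (prd C A B)"
  shows "F1 A' B (Fr (fprod C f (cid C B)) p) = Fr f (F1 A B p)"
proof -
  obtain D \<alpha> where pp: "p = (D,\<alpha>)" by fastforce
  have rw: "D \<in> Ob C" "\<alpha> \<in> carr P (prd C (prd C A B) D)" using p pp by auto
  have "rmap P (iso1 A' B D) (rmap P (fprod C (fprod C f (cid C B)) (cid C D)) \<alpha>)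
      = rmap P (fprod C f (cid C (prd C B D))) (rmap P (iso1 A B D) \<alpha>)"
    using O f rw by (intro rmap2[where Z="prd C (prd C A B) D"]) (simp_all add: iso1_def)
  then show ?thesis unfolding pp F1_def Fr_def by simp
qed

lemma bc2: assumes O: "A \<in> Ob C" "B \<in> Ob C" "A' \<in> Ob C" and f: "f \<in> Ar C" "cdom C f = A'" "ccod C f = A"
  and p: "p \<in> un_raw C P (prd C B A)"
  shows "F2 B A' (Fr (fprod C (cid C B) f) p) = Fr f (F2 B A p)"
proof -
  obtain D \<alpha> where pp: "p = (D,\<alpha>)" by fastforce
  have rw: "D \<in> Ob C" "\<alpha> \<in> carr P (prd C (prd C B A) D)" using p pp by auto
  have "rmap P (iso2 B A' D) (rmap P (fprod C (fprod C (cid C B) f) (cid C D)) \<alpha>)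
      = rmap P (fprod C f (cid C (prd C B D))) (rmap P (iso2 B A D) \<alpha>)"
    using O f rw by (intro rmap2[where Z="prd C (prd C B A) D"]) (simp_all add: iso2_def)
  then show ?thesis unfolding pp F2_def Fr_def by simp
qed

lemma carrE: assumes "X \<in> carr (un_completion C P) A" obtains p where "p \<in> un_raw C P A" "X = un_class C P A p"
  using assms unfolding carr_un by blast

lemma cls_carr: "p \<in> un_raw C P A \<Longrightarrow> un_class C P A p \<in> carr (un_completion C P) A"
  unfolding carr_un by blast

lemma Fr_id: "A \<in> Ob C \<Longrightarrow> p \<in> un_raw C P A \<Longrightarrow> Fr (cid C A) p = p"
  by (cases p) (simp add: Fr_def)

lemma Fr_cmp: "f \<in> Ar C \<Longrightarrow> g \<in> Ar C \<Longrightarrow> ccod C f = cdom C g \<Longrightarrow> p \<in> un_raw C P (ccod C g) \<Longrightarrow>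
  Fr (cmp C g f) p = Fr f (Fr g p)"
proof -
  assume a: "f \<in> Ar C" "g \<in> Ar C" "ccod C f = cdom C g" "p \<in> un_raw C P (ccod C g)"
  obtain D \<gamma> where pp: "p = (D,\<gamma>)" by fastforce
  have rw: "D \<in> Ob C" "\<gamma> \<in> carr P (prd C (ccod C g) D)" using a pp by auto
  have "rmap P (fprod C (cmp C g f) (cid C D)) \<gamma> = rmap P (fprod C f (cid C D)) (rmap P (fprod C g (cid C D)) \<gamma>)"
  proof -
    have e: "fprod C (cmp C g f) (cid C D) = cmp C (fprod C g (cid C D)) (fprod C f (cid C D))"
      using a rw by simp
    show ?thesis unfolding e using a rw by (intro rmap_cmp) (simp_all del: fprod_eq add: fprod_def)
  qed
  then show ?thesis unfolding pp Fr_def by simp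
qed

end

context sdoc begin

abbreviation "U \<equiv> un_completion C P"

lemma U_refl: "A \<in> Ob C \<Longrightarrow> x \<in> carr U A \<Longrightarrow> le U A x x"
  by (erule carrE) (simp add: le_cls pre_refl)

lemma U_trans: assumes A: "A \<in> Ob C" and xyz: "x \<in> carr U A" "y \<in> carr U A" "z \<in> carr U A"
  and "le U A x y" "le U A y z" shows "le U A x z"
proof -
  obtain p q r where "p \<in> un_raw C P A" "q \<in> un_raw C P A" "r \<in> un_raw C P A"
    "x = un_class C P A p" "y = un_class C P A q" "z = un_class C P A r"
    using xyz by (meson carrE)
  then show ?thesis using assms le_cls pre_trans by metis
qed

lemma U_antisym: assumes A: "A \<in> Ob C" and xy: "x \<in> carr U A" "y \<in> carr U A"
  and "le U A x y" "le U A y x" shows "x = y"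
proof -
  obtain p q where "p \<in> un_raw C P A" "q \<in> un_raw C P A"
    "x = un_class C P A p" "y = un_class C P A q"
    using xy by (meson carrE)
  then show ?thesis using assms le_cls cls_eq un_equiv_def by metis
qed

lemma U_carr: assumes f: "f \<in> Ar C" and y: "y \<in> carr U (ccod C f)" shows "rmap U f y \<in> carr U (cdom C f)"
proof -
  obtain p where p: "p \<in> un_raw C P (ccod C f)" "y = un_class C P (ccod C f) p" using y by (rule carrE)
  show ?thesis unfolding p(2) using f p by (subst rmap_un_cls) (auto intro: cls_carr Fr_raw)
qed

lemma U_mono: assumes f: "f \<in> Ar C" and y: "y \<in> carr U (ccod C f)" "y' \<in> carr U (ccod C f)"
  and le: "le U (ccod C f) y y'" shows "le U (cdom C f) (rmap U f y) (rmap U f y')"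
proof -
  obtain p where p: "p \<in> un_raw C P (ccod C f)" "y = un_class C P (ccod C f) p" using y(1) by (rule carrE)
  obtain q where q: "q \<in> un_raw C P (ccod C f)" "y' = un_class C P (ccod C f) q" using y(2) by (rule carrE)
  have "un_pre C P (ccod C f) p q" using le p q f le_cls by auto
  then have "un_pre C P (cdom C f) (Fr f p) (Fr f q)" using f p q by (intro Fr_pre) auto
  then show ?thesis unfolding p(2) q(2) using f p q
    by (simp add: rmap_un_cls le_cls Fr_raw)
qed

lemma U_id: assumes A: "A \<in> Ob C" and x: "x \<in> carr U A" shows "rmap U (cid C A) x = x"
proof -
  obtain p where p: "p \<in> un_raw C P A" "x = un_class C P A p" using x by (rule carrE)
  show ?thesis unfolding p(2) using A p by (simp add: rmap_un_cls Fr_id)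
qed

lemma U_cmp: assumes fg: "f \<in> Ar C" "g \<in> Ar C" "ccod C f = cdom C g" and z: "z \<in> carr U (ccod C g)"
  shows "rmap U (cmp C g f) z = rmap U f (rmap U g z)"
proof -
  obtain p where p: "p \<in> un_raw C P (ccod C g)" "z = un_class C P (ccod C g) p" using z by (rule carrE)
  have "Fr g p \<in> un_raw C P (cdom C g)" using fg p by (intro Fr_raw) auto
  then show ?thesis unfolding p(2) using fg p
    by (simp add: rmap_un_cls Fr_cmp)
qed

lemma U_slat: "slat_doctrine C U"
  unfolding slat_doctrine_def
proof (intro conjI)
  show "fp_category C" by (rule fp)
  show "\<forall>A\<in>Ob C.
        (\<forall>x\<in>carr U A. le U A x x) \<and>
        (\<forall>x\<in>carr U A. \<forall>y\<in>carr U A. \<forall>z\<in>carr U A. le U A x y \<longrightarrow> le U A y z \<longrightarrow> le U A x z) \<and>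
        (\<forall>x\<in>carr U A. \<forall>y\<in>carr U A. le U A x y \<longrightarrow> le U A y x \<longrightarrow> x = y)"
    using U_refl U_trans U_antisym by blast
  show "\<forall>f\<in>Ar C. \<forall>y\<in>carr U (ccod C f). rmap U f y \<in> carr U (cdom C f)"
    using U_carr by blast
  show "\<forall>f\<in>Ar C. \<forall>y\<in>carr U (ccod C f). \<forall>y'\<in>carr U (ccod C f).
        le U (ccod C f) y y' \<longrightarrow> le U (cdom C f) (rmap U f y) (rmap U f y')"
    using U_mono by blast
  show "\<forall>A\<in>Ob C. \<forall>x\<in>carr U A. rmap U (cid C A) x = x"
    using U_id by blast
  show "\<forall>f\<in>Ar C. \<forall>g\<in>Ar C. ccod C f = cdom C g \<longrightarrow>
        (\<forall>z\<in>carr U (ccod C g). rmap U (cmp C g f) z = rmap U f (rmap U g z))"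
    using U_cmp by blast
qed


lemma fa1_carr: "A1 \<in> Ob C \<Longrightarrow> A2 \<in> Ob C \<Longrightarrow> y \<in> carr U (prd C A1 A2) \<Longrightarrow> fa1 A1 A2 y \<in> carr U A1"
  by (erule carrE) (simp add: fa1_cls cls_carr F1_raw)
lemma fa2_carr: "A1 \<in> Ob C \<Longrightarrow> A2 \<in> Ob C \<Longrightarrow> y \<in> carr U (prd C A1 A2) \<Longrightarrow> fa2 A1 A2 y \<in> carr U A2"
  by (erule carrE) (simp add: fa2_cls cls_carr F2_raw)

lemma fa1_adj: assumes O: "A1 \<in> Ob C" "A2 \<in> Ob C" and x: "x \<in> carr U A1" and y: "y \<in> carr U (prd C A1 A2)"
  shows "le U (prd C A1 A2) (rmap U (pj1 C A1 A2) x) y \<longleftrightarrow> le U A1 x (fa1 A1 A2 y)"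
proof -
  obtain p where p: "p \<in> un_raw C P A1" "x = un_class C P A1 p" using x by (rule carrE)
  obtain q where q: "q \<in> un_raw C P (prd C A1 A2)" "y = un_class C P (prd C A1 A2) q" using y by (rule carrE)
  have r: "Fr (pj1 C A1 A2) p \<in> un_raw C P (prd C A1 A2)" using O p by (intro Fr_raw) auto
  have "rmap U (pj1 C A1 A2) x = un_class C P (prd C A1 A2) (Fr (pj1 C A1 A2) p)"
    unfolding p(2) using O p by (intro rmap_un_cls) auto
  then show ?thesis unfolding q(2) using O p q r
    by (simp add: fa1_cls le_cls F1_raw adj1)
qed

lemma fa2_adj: assumes O: "A1 \<in> Ob C" "A2 \<in> Ob C" and x: "x \<in> carr U A2" and y: "y \<in> carr U (prd C A1 A2)"
  shows "le U (prd C A1 A2) (rmap U (pj2 C A1 A2) x) y \<longleftrightarrow> le U A2 x (fa2 A1 A2 y)"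
proof -
  obtain p where p: "p \<in> un_raw C P A2" "x = un_class C P A2 p" using x by (rule carrE)
  obtain q where q: "q \<in> un_raw C P (prd C A1 A2)" "y = un_class C P (prd C A1 A2) q" using y by (rule carrE)
  have r: "Fr (pj2 C A1 A2) p \<in> un_raw C P (prd C A1 A2)" using O p by (intro Fr_raw) auto
  have "rmap U (pj2 C A1 A2) x = un_class C P (prd C A1 A2) (Fr (pj2 C A1 A2) p)"
    unfolding p(2) using O p by (intro rmap_un_cls) auto
  then show ?thesis unfolding q(2) using O p q r
    by (simp add: fa2_cls le_cls F2_raw adj2)
qed

lemma fa1_bc: assumes O: "A \<in> Ob C" "B \<in> Ob C" "A' \<in> Ob C" and f: "f \<in> hom C A' A"
  and y: "y \<in> carr U (prd C A B)"
  shows "fa1 A' B (rmap U (fprod C f (cid C B)) y) = rmap U f (fa1 A B y)"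
proof -
  have f': "f \<in> Ar C" "cdom C f = A'" "ccod C f = A" using f by (auto simp: hom_def)
  obtain p where p: "p \<in> un_raw C P (prd C A B)" "y = un_class C P (prd C A B) p" using y by (rule carrE)
  have r: "Fr (fprod C f (cid C B)) p \<in> un_raw C P (prd C A' B)" using O f' p by (intro Fr_raw) auto
  have r2: "F1 A B p \<in> un_raw C P A" using O p by (intro F1_raw) auto
  have "rmap U (fprod C f (cid C B)) y = un_class C P (prd C A' B) (Fr (fprod C f (cid C B)) p)"
    unfolding p(2) using O f' p by (intro rmap_un_cls) auto
  moreover have "rmap U f (fa1 A B y) = un_class C P A' (Fr f (F1 A B p))"
    unfolding p(2) using O f' p r2 by (simp add: fa1_cls rmap_un_cls)
  ultimately show ?thesis using O f' p r by (simp del: fprod_eq add: fa1_cls bc1[OF O f' p(1)])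
qed

lemma fa2_bc: assumes O: "A \<in> Ob C" "B \<in> Ob C" "A' \<in> Ob C" and f: "f \<in> hom C A' A"
  and y: "y \<in> carr U (prd C B A)"
  shows "fa2 B A' (rmap U (fprod C (cid C B) f) y) = rmap U f (fa2 B A y)"
proof -
  have f': "f \<in> Ar C" "cdom C f = A'" "ccod C f = A" using f by (auto simp: hom_def)
  obtain p where p: "p \<in> un_raw C P (prd C B A)" "y = un_class C P (prd C B A) p" using y by (rule carrE)
  have r: "Fr (fprod C (cid C B) f) p \<in> un_raw C P (prd C B A')" using O f' p by (intro Fr_raw) auto
  have r2: "F2 B A p \<in> un_raw C P A" using O p by (intro F2_raw) auto
  have "rmap U (fprod C (cid C B) f) y = un_class C P (prd C B A') (Fr (fprod C (cid C B) f) p)"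
    unfolding p(2) using O f' p by (intro rmap_un_cls) auto
  moreover have "rmap U f (fa2 B A y) = un_class C P A' (Fr f (F2 B A p))"
    unfolding p(2) using O f' p r2 by (simp add: fa2_cls rmap_un_cls)
  ultimately show ?thesis using O f' p r by (simp del: fprod_eq add: fa2_cls bc2[OF O f' p(1)])
qed

lemma main: "universal_doctrine C U"
  unfolding universal_doctrine_def
proof (intro conjI)
  show "slat_doctrine C U" by (rule U_slat)
  show "\<exists>fa1 fa2 :: 'o \<Rightarrow> 'o \<Rightarrow> ('o \<times> 'e) set \<Rightarrow> ('o \<times> 'e) set.
        (\<forall>A1\<in>Ob C. \<forall>A2\<in>Ob C.
           (\<forall>y\<in>carr U (prd C A1 A2). fa1 A1 A2 y \<in> carr U A1) \<and>
           (\<forall>x\<in>carr U A1. \<forall>y\<in>carr U (prd C A1 A2).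
              le U (prd C A1 A2) (rmap U (pj1 C A1 A2) x) y \<longleftrightarrow> le U A1 x (fa1 A1 A2 y)) \<and>
           (\<forall>y\<in>carr U (prd C A1 A2). fa2 A1 A2 y \<in> carr U A2) \<and>
           (\<forall>x\<in>carr U A2. \<forall>y\<in>carr U (prd C A1 A2).
              le U (prd C A1 A2) (rmap U (pj2 C A1 A2) x) y \<longleftrightarrow> le U A2 x (fa2 A1 A2 y))) \<and>
        (\<forall>A\<in>Ob C. \<forall>B\<in>Ob C. \<forall>A'\<in>Ob C. \<forall>f\<in>hom C A' A.
           (\<forall>y\<in>carr U (prd C A B).
              fa1 A' B (rmap U (fprod C f (cid C B)) y) = rmap U f (fa1 A B y)) \<and>
           (\<forall>y\<in>carr U (prd C B A).
              fa2 B A' (rmap U (fprod C (cid C B) f) y) = rmap U f (fa2 B A y)))"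
    apply (rule exI[of _ fa1], rule exI[of _ fa2])
    apply (intro conjI ballI)
    apply (simp_all del: fprod_eq add: fa1_carr fa2_carr fa1_adj fa2_adj fa1_bc fa2_bc)
    done
qed

end

theorem theorem2:
  assumes "slat_doctrine C P"
  shows "universal_doctrine C (un_completion C P)"
  using assms sdoc.main sdoc.intro by blast

end
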